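(* Let $P$ be a power quandle and $G=\mathrm{Gr}(P)$. Then $\mathrm{Gr}(\mathrm{Pq}(G))\cong G\times\mathrm{A}(G)$ as groups, where $\mathrm{A}(G)$ is the kernel of $\epsilon\colon\mathrm{Gr}(\mathrm{Pq}(G))\to G$.
   Context: A power quandle $(P,\rhd,\pi,e)$ consists of a set $P$, a binary operation $\rhd$, an element $e$, and maps $\pi^n\colon P\to P$ ($n\in\mathbb{Z}$) satisfying: each $\lambda_a\colon b\mapsto a\rhd b$ is bijective and $a\rhd(b\rhd c)=(a\rhd b)\rhd(a\rhd c)$; $a\rhd a=a$; $e\rhd b=b$, $a\rhd e=e$; $\pi^1=\mathrm{id}$, $\pi^m\circ\pi^n=\pi^{mn}$; $\pi^0(a)=e$; $a\rhd\pi^n(b)=\pi^n(a\rhd b)$; $\pi^n(a)\rhd b=\lambda_a^n(b)$. For a group $G$, $\mathrm{Pq}(G)$ is the power quandle with $a\rhd b=aba^{-1}$, $\pi^n(a)=a^n$, unit the identity. For a power quandle $P$, $\mathrm{Gr}(P)$ is the group with generators $\sigma(a)$, $a\in P$, and relations $\sigma(a\rhd b)=\sigma(a)\sigma(b)\sigma(a)^{-1}$, $\sigma(\pi^n(a))=\sigma(a)^n$, $\sigma(e)=1$. For a group $G$, $\epsilon\colon\mathrm{Gr}(\mathrm{Pq}(G))\to G$ is the homomorphism with $\epsilon(\sigma(a))=a$. *)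

theory Defs
  imports "HOL-Algebra.Algebra"
begin

definition lam_pow :: "'a set \<Rightarrow> ('a \<Rightarrow> 'a \<Rightarrow> 'a) \<Rightarrow> 'a \<Rightarrow> int \<Rightarrow> 'a \<Rightarrow> 'a" where
  "lam_pow P op a n =
     (if n \<ge> 0 then (op a) ^^ (nat n) else (the_inv_into P (op a)) ^^ (nat (- n)))"

definition power_quandle ::
  "'a set \<Rightarrow> ('a \<Rightarrow> 'a \<Rightarrow> 'a) \<Rightarrow> (int \<Rightarrow> 'a \<Rightarrow> 'a) \<Rightarrow> 'a \<Rightarrow> bool" where
  "power_quandle P op pw e \<longleftrightarrow>
     e \<in> P \<and>
     (\<forall>a\<in>P. \<forall>b\<in>P. op a b \<in> P) \<and>
     (\<forall>n a. a \<in> P \<longrightarrow> pw n a \<in> P) \<and>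
     (\<forall>a\<in>P. bij_betw (op a) P P) \<and>
     (\<forall>a\<in>P. \<forall>b\<in>P. \<forall>c\<in>P. op a (op b c) = op (op a b) (op a c)) \<and>
     (\<forall>a\<in>P. op a a = a) \<and>
     (\<forall>b\<in>P. op e b = b) \<and>
     (\<forall>a\<in>P. op a e = e) \<and>
     (\<forall>a\<in>P. pw 1 a = a) \<and>
     (\<forall>m n. \<forall>a\<in>P. pw m (pw n a) = pw (m * n) a) \<and>
     (\<forall>a\<in>P. pw 0 a = e) \<and>
     (\<forall>n. \<forall>a\<in>P. \<forall>b\<in>P. op a (pw n b) = pw n (op a b)) \<and>
     (\<forall>n. \<forall>a\<in>P. \<forall>b\<in>P. op (pw n a) b = lam_pow P op a n b)"

text \<open>Words: a letter (a, True) stands for sigma(a), (a, False) for sigma(a) inverse.\<close>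
type_synonym 'a word = "('a \<times> bool) list"

definition words :: "'a set \<Rightarrow> 'a word set" where
  "words S = {w. fst ` set w \<subseteq> S}"

definition winv :: "'a word \<Rightarrow> 'a word" where
  "winv w = rev (map (\<lambda>(a, b). (a, \<not> b)) w)"

definition wpow :: "'a word \<Rightarrow> int \<Rightarrow> 'a word" where
  "wpow w n = (if n \<ge> 0 then concat (replicate (nat n) w) else concat (replicate (nat (- n)) (winv w)))"

inductive pres_eq :: "'a set \<Rightarrow> ('a word \<times> 'a word) set \<Rightarrow> 'a word \<Rightarrow> 'a word \<Rightarrow> bool"
  for S R where
  refl: "w \<in> words S \<Longrightarrow> pres_eq S R w w"
| sym: "pres_eq S R x y \<Longrightarrow> pres_eq S R y x"
| trans: "pres_eq S R x y \<Longrightarrow> pres_eq S R y z \<Longrightarrow> pres_eq S R x z"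
| cancel: "a \<in> S \<Longrightarrow> pres_eq S R [(a, b), (a, \<not> b)] []"
| rel: "(x, y) \<in> R \<Longrightarrow> x \<in> words S \<Longrightarrow> y \<in> words S \<Longrightarrow> pres_eq S R x y"
| ctx: "pres_eq S R x y \<Longrightarrow> u \<in> words S \<Longrightarrow> v \<in> words S \<Longrightarrow> pres_eq S R (u @ x @ v) (u @ y @ v)"

definition wclass :: "'a set \<Rightarrow> ('a word \<times> 'a word) set \<Rightarrow> 'a word \<Rightarrow> 'a word set" where
  "wclass S R w = {y. pres_eq S R w y}"

definition pres_mult :: "'a set \<Rightarrow> ('a word \<times> 'a word) set \<Rightarrow> 'a word set \<Rightarrow> 'a word set \<Rightarrow> 'a word set" where
  "pres_mult S R U V = {z. \<exists>x\<in>U. \<exists>y\<in>V. pres_eq S R (x @ y) z}"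

definition presentation :: "'a set \<Rightarrow> ('a word \<times> 'a word) set \<Rightarrow> 'a word set monoid" where
  "presentation S R =
     \<lparr>carrier = wclass S R ` words S,
      monoid.mult = pres_mult S R,
      monoid.one = wclass S R []\<rparr>"

definition Gr_rels :: "'a set \<Rightarrow> ('a \<Rightarrow> 'a \<Rightarrow> 'a) \<Rightarrow> (int \<Rightarrow> 'a \<Rightarrow> 'a) \<Rightarrow> 'a \<Rightarrow> ('a word \<times> 'a word) set" where
  "Gr_rels P op pw e =
     {([(op a b, True)], [(a, True), (b, True), (a, False)]) | a b. a \<in> P \<and> b \<in> P}
     \<union> {([(pw n a, True)], wpow [(a, True)] n) | n a. a \<in> P}
     \<union> {([(e, True)], [])}"

definition Gr :: "'a set \<Rightarrow> ('a \<Rightarrow> 'a \<Rightarrow> 'a) \<Rightarrow> (int \<Rightarrow> 'a \<Rightarrow> 'a) \<Rightarrow> 'a \<Rightarrow> 'a word set monoid" where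
  "Gr P op pw e = presentation P (Gr_rels P op pw e)"

text \<open>Pq(G) has carrier G, a |> b = a b a^-1, pw^n a = a^n, unit 1. Gr_Pq G is Gr(Pq(G)).\<close>
definition Gr_Pq :: "('g, 'm) monoid_scheme \<Rightarrow> 'g word set monoid" where
  "Gr_Pq G = Gr (carrier G) (\<lambda>a b. a \<otimes>\<^bsub>G\<^esub> b \<otimes>\<^bsub>G\<^esub> inv\<^bsub>G\<^esub> a)
                (\<lambda>n a. a [^]\<^bsub>G\<^esub> (n::int)) \<one>\<^bsub>G\<^esub>"

definition word_eval :: "('g, 'm) monoid_scheme \<Rightarrow> 'g word \<Rightarrow> 'g" where
  "word_eval G w = foldr (\<lambda>(a, b) g. (if b then a else inv\<^bsub>G\<^esub> a) \<otimes>\<^bsub>G\<^esub> g) w \<one>\<^bsub>G\<^esub>"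

definition epsilon :: "('g, 'm) monoid_scheme \<Rightarrow> 'g word set \<Rightarrow> 'g" where
  "epsilon G U = word_eval G (SOME w. w \<in> U)"

definition A_grp :: "('g, 'm) monoid_scheme \<Rightarrow> 'g word set monoid" where
  "A_grp G = (Gr_Pq G)\<lparr>carrier := kernel (Gr_Pq G) G (epsilon G)\<rparr>"

end

theory Submission
  imports Defs
begin


lemma words_append[simp]: "x @ y \<in> words S \<longleftrightarrow> x \<in> words S \<and> y \<in> words S"
  by (auto simp: words_def)
lemma words_Cons[simp]: "(a#y) \<in> words S \<longleftrightarrow> fst a \<in> S \<and> y \<in> words S"
  by (auto simp: words_def)
lemma words_Nil[simp]: "[] \<in> words S"
  by (auto simp: words_def)

lemma pres_eq_words: "pres_eq S R x y \<Longrightarrow> x \<in> words S \<and> y \<in> words S"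
  by (induction rule: pres_eq.induct) (auto simp: words_def)

lemma pres_eq_append:
  assumes "pres_eq S R x x'" "pres_eq S R y y'"
  shows "pres_eq S R (x @ y) (x' @ y')"
proof -
  have w: "x \<in> words S" "x' \<in> words S" "y \<in> words S" "y' \<in> words S"
    using pres_eq_words assms by blast+
  have "pres_eq S R ([] @ x @ y) ([] @ x' @ y)"
    by (rule pres_eq.ctx[OF assms(1)]) (use w in auto)
  moreover have "pres_eq S R (x' @ y @ []) (x' @ y' @ [])"
    by (rule pres_eq.ctx[OF assms(2)]) (use w in auto)
  ultimately show ?thesis by (auto intro: pres_eq.trans)
qed

lemma wclass_eq_iff:
  assumes "x \<in> words S" "y \<in> words S"
  shows "wclass S R x = wclass S R y \<longleftrightarrow> pres_eq S R x y"
proof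
  assume "wclass S R x = wclass S R y"
  moreover have "y \<in> wclass S R y" using assms by (auto simp: wclass_def intro: pres_eq.refl)
  ultimately show "pres_eq S R x y" by (auto simp: wclass_def)
next
  assume "pres_eq S R x y"
  then show "wclass S R x = wclass S R y"
    by (auto simp: wclass_def intro: pres_eq.trans pres_eq.sym)
qed

lemma pres_mult_wclass:
  assumes "x \<in> words S" "y \<in> words S"
  shows "pres_mult S R (wclass S R x) (wclass S R y) = wclass S R (x @ y)"
proof
  show "pres_mult S R (wclass S R x) (wclass S R y) \<subseteq> wclass S R (x @ y)"
    by (auto simp: pres_mult_def wclass_def intro: pres_eq.trans pres_eq_append)
  show "wclass S R (x @ y) \<subseteq> pres_mult S R (wclass S R x) (wclass S R y)"
    using assms by (auto simp: pres_mult_def wclass_def intro!: pres_eq.refl)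
qed

lemma winv_words[simp]: "winv w \<in> words S \<longleftrightarrow> w \<in> words S"
  by (auto simp: winv_def words_def image_image case_prod_beta)

lemma winv_Cons[simp]: "winv (x # w) = winv w @ [(fst x, \<not> snd x)]"
  by (cases x) (simp add: winv_def)
lemma winv_Nil[simp]: "winv [] = []" by (simp add: winv_def)
lemma winv_append[simp]: "winv (x @ y) = winv y @ winv x" by (simp add: winv_def)
lemma winv_winv[simp]: "winv (winv w) = w" by (induction w) (auto simp: winv_def)

lemma pres_eq_winv_r: "w \<in> words S \<Longrightarrow> pres_eq S R (w @ winv w) []"
proof (induction w)
  case Nil then show ?case by (auto intro: pres_eq.refl)
next
  case (Cons x w)
  obtain a b where x: "x = (a,b)" by (cases x)
  have "pres_eq S R ([(a,b)] @ (w @ winv w) @ [(a, \<not> b)]) ([(a,b)] @ [] @ [(a, \<not> b)])"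
    by (rule pres_eq.ctx) (use Cons x in auto)
  moreover have "pres_eq S R [(a,b),(a,\<not>b)] []" using Cons x by (auto intro: pres_eq.cancel)
  ultimately show ?case using x by (auto intro: pres_eq.trans)
qed

lemma pres_eq_winv_l: "w \<in> words S \<Longrightarrow> pres_eq S R (winv w @ w) []"
  using pres_eq_winv_r[of "winv w" S R] by simp

lemma presentation_group: "group (presentation S R)"
proof (rule groupI)
  fix x y assume "x \<in> carrier (presentation S R)" "y \<in> carrier (presentation S R)"
  then show "x \<otimes>\<^bsub>presentation S R\<^esub> y \<in> carrier (presentation S R)"
    by (auto simp: presentation_def pres_mult_wclass)
next
  show "\<one>\<^bsub>presentation S R\<^esub> \<in> carrier (presentation S R)"
    by (auto simp: presentation_def)
next
  fix x y z assume "x \<in> carrier (presentation S R)" "y \<in> carrier (presentation S R)"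
    "z \<in> carrier (presentation S R)"
  then show "x \<otimes>\<^bsub>presentation S R\<^esub> y \<otimes>\<^bsub>presentation S R\<^esub> z =
      x \<otimes>\<^bsub>presentation S R\<^esub> (y \<otimes>\<^bsub>presentation S R\<^esub> z)"
    by (auto simp: presentation_def pres_mult_wclass)
next
  fix x assume "x \<in> carrier (presentation S R)"
  then show "\<one>\<^bsub>presentation S R\<^esub> \<otimes>\<^bsub>presentation S R\<^esub> x = x"
    by (auto simp: presentation_def pres_mult_wclass)
next
  fix x assume "x \<in> carrier (presentation S R)"
  then obtain w where w: "w \<in> words S" "x = wclass S R w" by (auto simp: presentation_def)
  show "\<exists>y\<in>carrier (presentation S R). y \<otimes>\<^bsub>presentation S R\<^esub> x = \<one>\<^bsub>presentation S R\<^esub>"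
    apply (rule bexI[of _ "wclass S R (winv w)"])
    using w pres_eq_winv_l[of w S R]
    by (auto simp: presentation_def pres_mult_wclass wclass_eq_iff)
qed

lemma pres_carrier: "carrier (presentation S R) = wclass S R ` words S"
  by (simp add: presentation_def)
lemma pres_mult: "x \<in> words S \<Longrightarrow> y \<in> words S \<Longrightarrow>
   wclass S R x \<otimes>\<^bsub>presentation S R\<^esub> wclass S R y = wclass S R (x @ y)"
  by (simp add: presentation_def pres_mult_wclass)
lemma pres_one: "\<one>\<^bsub>presentation S R\<^esub> = wclass S R []"
  by (simp add: presentation_def)
lemma pres_inv: "w \<in> words S \<Longrightarrow> inv\<^bsub>presentation S R\<^esub> (wclass S R w) = wclass S R (winv w)"
  apply (rule group.inv_equality[OF presentation_group])
  using pres_eq_winv_l[of w S R] by (auto simp: pres_carrier pres_mult pres_one wclass_eq_iff)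

lemma some_in_class:
  assumes "w \<in> words S"
  shows "(SOME v. v \<in> wclass S R w) \<in> words S \<and> wclass S R (SOME v. v \<in> wclass S R w) = wclass S R w"
proof -
  have "w \<in> wclass S R w" using assms by (auto simp: wclass_def intro: pres_eq.refl)
  then have "(SOME v. v \<in> wclass S R w) \<in> wclass S R w" by (rule someI)
  then have "pres_eq S R w (SOME v. v \<in> wclass S R w)" by (simp add: wclass_def)
  moreover from this have "(SOME v. v \<in> wclass S R w) \<in> words S" using pres_eq_words by blast
  ultimately show ?thesis using assms wclass_eq_iff pres_eq.sym by metis
qed



definition weval :: "('g,'m) monoid_scheme \<Rightarrow> ('a \<Rightarrow> 'g) \<Rightarrow> 'a word \<Rightarrow> 'g" where
  "weval H f w = foldr (\<lambda>(a, b) g. (if b then f a else inv\<^bsub>H\<^esub> (f a)) \<otimes>\<^bsub>H\<^esub> g) w \<one>\<^bsub>H\<^esub>"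

lemma weval_Nil[simp]: "weval H f [] = \<one>\<^bsub>H\<^esub>" by (simp add: weval_def)
lemma weval_Cons[simp]: "weval H f ((a,b) # w) = (if b then f a else inv\<^bsub>H\<^esub> (f a)) \<otimes>\<^bsub>H\<^esub> weval H f w"
  by (simp add: weval_def)

lemma word_eval_weval: "word_eval G w = weval G id w"
  by (induction w) (auto simp: word_eval_def weval_def)

context group begin

lemma weval_closed: "f ` S \<subseteq> carrier G \<Longrightarrow> w \<in> words S \<Longrightarrow> weval G f w \<in> carrier G"
  by (induction w) auto

lemma weval_append: "f ` S \<subseteq> carrier G \<Longrightarrow> x \<in> words S \<Longrightarrow> y \<in> words S \<Longrightarrow>
   weval G f (x @ y) = weval G f x \<otimes> weval G f y"
  by (induction x) (auto simp: m_assoc weval_closed image_subset_iff)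

lemma weval_winv: "f ` S \<subseteq> carrier G \<Longrightarrow> w \<in> words S \<Longrightarrow>
   weval G f (winv w) = inv (weval G f w)"
proof (induction w)
  case Nil then show ?case by simp
next
  case (Cons x w)
  obtain a b where x: "x = (a,b)" by (cases x)
  have a: "f a \<in> carrier G" using Cons x by auto
  have wc: "weval G f w \<in> carrier G" using Cons weval_closed by auto
  have "weval G f (winv (x # w)) = inv (weval G f w) \<otimes> weval G f [(a, \<not> b)]"
    using Cons x by (simp add: weval_append)
  also have "\<dots> = inv (weval G f w) \<otimes> inv (if b then f a else inv (f a))"
    using a by simp
  also have "\<dots> = inv ((if b then f a else inv (f a)) \<otimes> weval G f w)"
    using a wc by (simp add: inv_mult_group)
  finally show ?case using x by simp
qed

lemma weval_concat_rep: "f ` S \<subseteq> carrier G \<Longrightarrow> w \<in> words S \<Longrightarrow>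
   weval G f (concat (replicate k w)) = weval G f w [^] k"
proof (induction k)
  case 0 then show ?case by simp
next
  case (Suc k)
  have "concat (replicate k w) \<in> words S" using Suc(3) by (induction k) auto
  then have "weval G f (concat (replicate (Suc k) w)) = weval G f w \<otimes> weval G f w [^] k"
    using Suc by (simp add: weval_append)
  then show ?case using nat_pow_Suc2[OF weval_closed[OF Suc.prems]] by simp
qed

lemma weval_wpow:
  assumes f: "f ` S \<subseteq> carrier G" and w: "w \<in> words S"
  shows "weval G f (wpow w n) = weval G f w [^] n"
proof (cases "n \<ge> 0")
  case True
  then have "wpow w n = concat (replicate (nat n) w)" unfolding wpow_def by (rule if_P)
  then have "weval G f (wpow w n) = weval G f w [^] (nat n)"
    using weval_concat_rep[OF f w, of "nat n"] by (simp only:)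
  moreover have "weval G f w [^] n = weval G f w [^] (nat n)"
  proof -
    obtain m where m: "n = int m" using True nonneg_int_cases by blast
    show ?thesis unfolding m nat_int by (rule int_pow_int)
  qed
  ultimately show ?thesis by metis
next
  case False
  have c: "weval G f w \<in> carrier G" by (rule weval_closed[OF f w])
  have wi: "winv w \<in> words S" using w by simp
  have "wpow w n = concat (replicate (nat (-n)) (winv w))" using False unfolding wpow_def by (rule if_not_P)
  then have "weval G f (wpow w n) = weval G f (winv w) [^] nat (-n)"
    using weval_concat_rep[OF f wi, of "nat (-n)"] by (simp only:)
  also have "\<dots> = inv (weval G f w) [^] nat (-n)" by (simp only: weval_winv[OF f w])
  also have "\<dots> = inv (weval G f w [^] nat (-n))" by (rule nat_pow_inv[OF c])
  also have "\<dots> = weval G f w [^] n"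
  proof -
    define m where "m = nat (-n)"
    have m: "n = - int m" using False unfolding m_def by simp
    show ?thesis unfolding m by (simp only: int_pow_neg_int[OF c] nat_int minus_minus)
  qed
  finally show ?thesis .
qed

lemma weval_respects:
  assumes f: "f ` S \<subseteq> carrier G"
    and R: "\<And>x y. (x, y) \<in> R \<Longrightarrow> x \<in> words S \<Longrightarrow> y \<in> words S \<Longrightarrow> weval G f x = weval G f y"
  shows "pres_eq S R x y \<Longrightarrow> weval G f x = weval G f y"
proof (induction rule: pres_eq.induct)
  case (cancel a b)
  then have "f a \<in> carrier G" using f by auto
  then show ?case by (cases b) auto
next
  case (rel x y) then show ?case using R by auto
next
  case (ctx x y u v)
  then have "x \<in> words S" "y \<in> words S" using pres_eq_words by blast+
  then show ?case using ctx by (simp add: weval_append[OF f])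
qed auto

end

definition pres_hom :: "('g,'m) monoid_scheme \<Rightarrow> ('a \<Rightarrow> 'g) \<Rightarrow> 'a word set \<Rightarrow> 'g" where
  "pres_hom H f U = weval H f (SOME w. w \<in> U)"

lemma (in group) pres_hom_wclass:
  assumes f: "f ` S \<subseteq> carrier G"
    and R: "\<And>x y. (x, y) \<in> R \<Longrightarrow> x \<in> words S \<Longrightarrow> y \<in> words S \<Longrightarrow> weval G f x = weval G f y"
    and w: "w \<in> words S"
  shows "pres_hom G f (wclass S R w) = weval G f w"
proof -
  let ?v = "SOME v. v \<in> wclass S R w"
  have "?v \<in> words S" "wclass S R ?v = wclass S R w" using some_in_class[OF w] by auto
  then have "pres_eq S R ?v w" using w wclass_eq_iff by blast
  then show ?thesis by (simp add: pres_hom_def weval_respects[OF f R])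
qed

lemma (in group) pres_hom_hom:
  assumes f: "f ` S \<subseteq> carrier G"
    and R: "\<And>x y. (x, y) \<in> R \<Longrightarrow> x \<in> words S \<Longrightarrow> y \<in> words S \<Longrightarrow> weval G f x = weval G f y"
  shows "pres_hom G f \<in> hom (presentation S R) G"
proof (rule homI)
  fix x assume "x \<in> carrier (presentation S R)"
  then obtain w where "w \<in> words S" "x = wclass S R w" by (auto simp: pres_carrier)
  then show "pres_hom G f x \<in> carrier G" by (simp add: pres_hom_wclass[OF f R] weval_closed[OF f])
next
  fix x y assume "x \<in> carrier (presentation S R)" "y \<in> carrier (presentation S R)"
  then obtain w v where "w \<in> words S" "x = wclass S R w" "v \<in> words S" "y = wclass S R v"
    by (auto simp: pres_carrier)
  then show "pres_hom G f (x \<otimes>\<^bsub>presentation S R\<^esub> y) = pres_hom G f x \<otimes> pres_hom G f y"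
    by (simp add: pres_mult pres_hom_wclass[OF f R] weval_append[OF f])
qed

lemma weval_gens:
  "w \<in> words S \<Longrightarrow> weval (presentation S R) (\<lambda>a. wclass S R [(a, True)]) w = wclass S R w"
proof (induction w)
  case Nil then show ?case by (simp add: pres_one)
next
  case (Cons x w)
  obtain a b where x: "x = (a,b)" by (cases x)
  have "a \<in> S" using Cons x by auto
  then have "(if b then wclass S R [(a, True)] else inv\<^bsub>presentation S R\<^esub> wclass S R [(a, True)])
       = wclass S R [(a,b)]"
    by (cases b) (auto simp: pres_inv winv_def)
  moreover have "wclass S R [(a,b)] \<otimes>\<^bsub>presentation S R\<^esub> wclass S R w = wclass S R ((a,b)#w)"
    using pres_mult[of "[(a,b)]" S w R] Cons \<open>a \<in> S\<close> x by simp
  ultimately show ?case using Cons x by simp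
qed

lemma hom_weval:
  assumes "group G" "group H" "h \<in> hom G H" "f ` S \<subseteq> carrier G" "w \<in> words S"
  shows "h (weval G f w) = weval H (h \<circ> f) w"
  using assms(5)
proof (induction w)
  case Nil then show ?case using assms by (simp add: hom_one)
next
  case (Cons x w)
  obtain a b where x: "x = (a,b)" by (cases x)
  have a: "f a \<in> carrier G" using assms Cons x by auto
  have wc: "weval G f w \<in> carrier G" using Cons group.weval_closed[OF assms(1,4)] by auto
  interpret gh: group_hom G H h using assms by (simp add: group_hom_def group_hom_axioms_def)
  have "h ((if b then f a else inv\<^bsub>G\<^esub> (f a)) \<otimes>\<^bsub>G\<^esub> weval G f w)
     = h (if b then f a else inv\<^bsub>G\<^esub> (f a)) \<otimes>\<^bsub>H\<^esub> h (weval G f w)"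
    using a wc by (cases b) auto
  then show ?case using Cons x a by (cases b) auto
qed



lemma pres_rel: "(x,y) \<in> R \<Longrightarrow> x \<in> words S \<Longrightarrow> y \<in> words S \<Longrightarrow> wclass S R x = wclass S R y"
  by (simp add: wclass_eq_iff pres_eq.rel)

lemma concat_rep_words: "w \<in> words S \<Longrightarrow> concat (replicate k w) \<in> words S"
  by (induction k) auto

lemma wpow_words: assumes "w \<in> words S" shows "wpow w n \<in> words S"
proof (cases "n \<ge> 0")
  case True
  then have "wpow w n = concat (replicate (nat n) w)" unfolding wpow_def by (rule if_P)
  then show ?thesis using concat_rep_words assms by metis
next
  case False
  then have "wpow w n = concat (replicate (nat (-n)) (winv w))" unfolding wpow_def by (rule if_not_P)
  then show ?thesis using concat_rep_words assms winv_words by metis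
qed

lemma weval_cong: "w \<in> words S \<Longrightarrow> (\<And>a. a \<in> S \<Longrightarrow> f a = g a) \<Longrightarrow> weval H f w = weval H g w"
  by (induction w) auto

abbreviation "gen S R a \<equiv> wclass S R [(a, True)]"

lemma gen_carrier: "a \<in> S \<Longrightarrow> gen S R a \<in> carrier (presentation S R)"
  unfolding pres_carrier by (rule imageI) simp

lemma gens_image: "(\<lambda>a. gen S R a) ` S \<subseteq> carrier (presentation S R)"
  by (rule image_subsetI) (rule gen_carrier)

context
  fixes P :: "'a set" and op :: "'a \<Rightarrow> 'a \<Rightarrow> 'a" and pw :: "int \<Rightarrow> 'a \<Rightarrow> 'a" and e :: 'a
begin

abbreviation "RR \<equiv> Gr_rels P op pw e"
abbreviation "XX \<equiv> presentation P RR"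

lemma Gr_gen_op:
  assumes "a \<in> P" "b \<in> P" "op a b \<in> P"
  shows "gen P RR (op a b) = gen P RR a \<otimes>\<^bsub>XX\<^esub> gen P RR b \<otimes>\<^bsub>XX\<^esub> inv\<^bsub>XX\<^esub> gen P RR a"
proof -
  interpret X: group XX by (rule presentation_group)
  have "gen P RR (op a b) = wclass P RR [(a, True), (b, True), (a, False)]"
    by (rule pres_rel) (use assms in \<open>unfold Gr_rels_def; blast\<close>, use assms in simp_all)
  also have "\<dots> = weval XX (gen P RR) [(a, True), (b, True), (a, False)]"
    by (rule weval_gens[symmetric]) (use assms in auto)
  also have "\<dots> = gen P RR a \<otimes>\<^bsub>XX\<^esub> gen P RR b \<otimes>\<^bsub>XX\<^esub> inv\<^bsub>XX\<^esub> gen P RR a"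
    using assms gen_carrier[of a P RR] gen_carrier[of b P RR] by (simp add: X.m_assoc)
  finally show ?thesis .
qed

lemma Gr_gen_pw:
  assumes "a \<in> P" "pw n a \<in> P"
  shows "gen P RR (pw n a) = gen P RR a [^]\<^bsub>XX\<^esub> n"
proof -
  interpret X: group XX by (rule presentation_group)
  have aw: "[(a,True)] \<in> words P" using assms by simp
  have "gen P RR (pw n a) = wclass P RR (wpow [(a, True)] n)"
    by (rule pres_rel) (use assms in \<open>unfold Gr_rels_def; blast\<close>, use assms wpow_words[OF aw] in simp_all)
  also have "\<dots> = weval XX (gen P RR) (wpow [(a, True)] n)"
    by (rule weval_gens[symmetric]) (rule wpow_words[OF aw])
  also have "\<dots> = weval XX (gen P RR) [(a, True)] [^]\<^bsub>XX\<^esub> n"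
    by (rule X.weval_wpow[OF gens_image aw])
  also have "weval XX (gen P RR) [(a, True)] = gen P RR a"
    using gen_carrier[of a P RR] assms by simp
  finally show ?thesis .
qed

lemma Gr_gen_e:
  assumes "e \<in> P"
  shows "gen P RR e = \<one>\<^bsub>XX\<^esub>"
proof -
  have "gen P RR e = wclass P RR []"
    by (rule pres_rel) (use assms in \<open>unfold Gr_rels_def; blast\<close>, use assms in simp_all)
  then show ?thesis by (simp add: pres_one)
qed

end



lemma (in group) conj_mult:
  "x \<in> carrier G \<Longrightarrow> y \<in> carrier G \<Longrightarrow> z \<in> carrier G \<Longrightarrow>
   (x \<otimes> y) \<otimes> z \<otimes> inv (x \<otimes> y) = x \<otimes> (y \<otimes> z \<otimes> inv y) \<otimes> inv x"
  by (simp add: m_assoc inv_mult_group)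

lemma (in group) comm_inv:
  assumes x: "x \<in> carrier G" and y: "y \<in> carrier G" and c: "x \<otimes> y = y \<otimes> x"
  shows "x \<otimes> inv y = inv y \<otimes> x"
proof -
  have "x \<otimes> inv y = inv y \<otimes> (y \<otimes> x) \<otimes> inv y" using x y by (simp add: m_assoc[symmetric])
  also have "\<dots> = inv y \<otimes> (x \<otimes> y) \<otimes> inv y" using c by simp
  also have "\<dots> = inv y \<otimes> x" using x y by (simp add: m_assoc)
  finally show ?thesis .
qed

context group begin

abbreviation "QR \<equiv> Gr_rels (carrier G) (\<lambda>a b. a \<otimes> b \<otimes> inv a) (\<lambda>n a. a [^] (n::int)) \<one>"
abbreviation "QQ \<equiv> presentation (carrier G) QR"

lemma Gr_Pq_eq: "Gr_Pq G = QQ"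
  by (simp add: Gr_Pq_def Gr_def)

lemma QQ_group: "group QQ" by (rule presentation_group)

lemma epsilon_eq: "epsilon G = pres_hom G id"
  by (rule ext) (simp add: epsilon_def pres_hom_def word_eval_weval)

lemma idS: "id ` carrier G \<subseteq> carrier G" by simp

lemma QR_cases:
  assumes "(x, y) \<in> QR"
  obtains a b where "a \<in> carrier G" "b \<in> carrier G" "x = [(a \<otimes> b \<otimes> inv a, True)]"
      "y = [(a, True), (b, True), (a, False)]"
    | n a where "a \<in> carrier G" "x = [(a [^] (n::int), True)]" "y = wpow [(a, True)] n"
    | "x = [(\<one>, True)]" "y = []"
  using assms unfolding Gr_rels_def by blast

lemma eps_resp:
  assumes "(x, y) \<in> QR" "x \<in> words (carrier G)" "y \<in> words (carrier G)"
  shows "weval G id x = weval G id y"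
  using assms(1)
proof (cases rule: QR_cases)
  case (1 a b)
  then show ?thesis by (simp add: m_assoc)
next
  case (2 n a)
  have aw: "[(a, True)] \<in> words (carrier G)" using 2 by simp
  have "weval G id y = weval G id [(a, True)] [^] n"
    unfolding 2 by (rule weval_wpow[OF idS aw])
  then show ?thesis using 2 by simp
next
  case 3
  then show ?thesis by simp
qed

lemma eps_hom: "epsilon G \<in> hom (Gr_Pq G) G"
  unfolding epsilon_eq Gr_Pq_eq by (rule pres_hom_hom[OF idS eps_resp])

lemma eps_wclass: "w \<in> words (carrier G) \<Longrightarrow> epsilon G (wclass (carrier G) QR w) = weval G id w"
  unfolding epsilon_eq by (rule pres_hom_wclass[OF idS eps_resp])

abbreviation "gQ a \<equiv> gen (carrier G) QR a"

lemma gQ_carrier: "a \<in> carrier G \<Longrightarrow> gQ a \<in> carrier QQ"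
  by (rule gen_carrier)

lemma gQ_conj: "a \<in> carrier G \<Longrightarrow> b \<in> carrier G \<Longrightarrow>
   gQ (a \<otimes> b \<otimes> inv a) = gQ a \<otimes>\<^bsub>QQ\<^esub> gQ b \<otimes>\<^bsub>QQ\<^esub> inv\<^bsub>QQ\<^esub> gQ a"
  by (rule Gr_gen_op) simp_all

lemma gQ_pow: "a \<in> carrier G \<Longrightarrow> gQ (a [^] (n::int)) = gQ a [^]\<^bsub>QQ\<^esub> n"
  by (rule Gr_gen_pw) simp_all

lemma gQ_one: "gQ \<one> = \<one>\<^bsub>QQ\<^esub>"
  by (rule Gr_gen_e) simp

lemma gQ_inv: "a \<in> carrier G \<Longrightarrow> gQ (inv a) = inv\<^bsub>QQ\<^esub> gQ a"
proof -
  assume a: "a \<in> carrier G"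
  interpret Q: group QQ by (rule QQ_group)
  have "gQ (inv a) = gQ (a [^] (- 1 :: int))" using a by (simp add: int_pow_neg)
  also have "\<dots> = gQ a [^]\<^bsub>QQ\<^esub> (- 1 :: int)" by (rule gQ_pow[OF a])
  also have "\<dots> = inv\<^bsub>QQ\<^esub> gQ a" using gQ_carrier[OF a] by (simp add: Q.int_pow_neg)
  finally show ?thesis .
qed

lemma wclass_letter: "a \<in> carrier G \<Longrightarrow>
  wclass (carrier G) QR [(a, b)] = gQ (if b then a else inv a)"
  using gQ_inv[of a] pres_inv[of "[(a, True)]" "carrier G" QR]
  by (cases b) (simp_all add: winv_def)

lemma conjQ:
  assumes "w \<in> words (carrier G)" "h \<in> carrier G"
  shows "wclass (carrier G) QR w \<otimes>\<^bsub>QQ\<^esub> gQ h \<otimes>\<^bsub>QQ\<^esub> inv\<^bsub>QQ\<^esub> wclass (carrier G) QR w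
     = gQ (weval G id w \<otimes> h \<otimes> inv weval G id w)"
  using assms(1)
proof (induction w)
  case Nil
  interpret Q: group QQ by (rule QQ_group)
  show ?case using assms gQ_carrier[of h] by (simp add: pres_one[symmetric])
next
  case (Cons x w)
  interpret Q: group QQ by (rule QQ_group)
  obtain a b where x: "x = (a,b)" by (cases x)
  have a: "a \<in> carrier G" and w: "w \<in> words (carrier G)" using Cons x by auto
  define c where "c = (if b then a else inv a)"
  have c: "c \<in> carrier G" using a by (simp add: c_def)
  have ev: "weval G id ((a,b)#w) = c \<otimes> weval G id w" by (simp add: c_def)
  have evc: "weval G id w \<in> carrier G" by (rule weval_closed[OF idS w])
  have W: "wclass (carrier G) QR w \<in> carrier QQ" using w by (simp add: pres_carrier)
  have cls: "wclass (carrier G) QR ((a,b)#w) = gQ c \<otimes>\<^bsub>QQ\<^esub> wclass (carrier G) QR w"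
    using pres_mult[of "[(a,b)]" "carrier G" w QR] a w wclass_letter[OF a, of b]
    by (simp add: c_def)
  have "wclass (carrier G) QR ((a,b)#w) \<otimes>\<^bsub>QQ\<^esub> gQ h \<otimes>\<^bsub>QQ\<^esub> inv\<^bsub>QQ\<^esub> wclass (carrier G) QR ((a,b)#w)
      = gQ c \<otimes>\<^bsub>QQ\<^esub> (wclass (carrier G) QR w \<otimes>\<^bsub>QQ\<^esub> gQ h \<otimes>\<^bsub>QQ\<^esub> inv\<^bsub>QQ\<^esub> wclass (carrier G) QR w)
         \<otimes>\<^bsub>QQ\<^esub> inv\<^bsub>QQ\<^esub> gQ c"
    unfolding cls by (rule Q.conj_mult[OF gQ_carrier[OF c] W gQ_carrier[OF assms(2)]])
  also have "\<dots> = gQ c \<otimes>\<^bsub>QQ\<^esub> gQ (weval G id w \<otimes> h \<otimes> inv weval G id w) \<otimes>\<^bsub>QQ\<^esub> inv\<^bsub>QQ\<^esub> gQ c"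
    by (simp only: Cons.IH[OF w])
  also have "\<dots> = gQ (c \<otimes> (weval G id w \<otimes> h \<otimes> inv weval G id w) \<otimes> inv c)"
    by (rule gQ_conj[symmetric]) (use c evc assms(2) in simp_all)
  also have "\<dots> = gQ (weval G id ((a,b)#w) \<otimes> h \<otimes> inv weval G id ((a,b)#w))"
    unfolding ev using conj_mult[OF c evc assms(2)] by simp
  finally show ?case unfolding x .
qed

lemma central_gen:
  assumes "z \<in> kernel (Gr_Pq G) G (epsilon G)" "h \<in> carrier G"
  shows "z \<otimes>\<^bsub>QQ\<^esub> gQ h = gQ h \<otimes>\<^bsub>QQ\<^esub> z"
proof -
  interpret Q: group QQ by (rule QQ_group)
  from assms(1) obtain w where w: "w \<in> words (carrier G)" "z = wclass (carrier G) QR w"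
    and e: "epsilon G z = \<one>"
    by (auto simp: kernel_def Gr_Pq_eq pres_carrier)
  have ev: "weval G id w = \<one>" using e eps_wclass[OF w(1)] w(2) by simp
  have zc: "z \<in> carrier QQ" using w by (simp add: pres_carrier)
  have "z \<otimes>\<^bsub>QQ\<^esub> gQ h \<otimes>\<^bsub>QQ\<^esub> inv\<^bsub>QQ\<^esub> z = gQ h"
    using conjQ[OF w(1) assms(2)] ev w(2) assms(2) by simp
  then have "z \<otimes>\<^bsub>QQ\<^esub> gQ h \<otimes>\<^bsub>QQ\<^esub> inv\<^bsub>QQ\<^esub> z \<otimes>\<^bsub>QQ\<^esub> z = gQ h \<otimes>\<^bsub>QQ\<^esub> z" by simp
  then show ?thesis using zc gQ_carrier[OF assms(2)] by (simp add: Q.m_assoc)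
qed

lemma central:
  assumes "z \<in> kernel (Gr_Pq G) G (epsilon G)" "y \<in> carrier (Gr_Pq G)"
  shows "z \<otimes>\<^bsub>Gr_Pq G\<^esub> y = y \<otimes>\<^bsub>Gr_Pq G\<^esub> z"
proof -
  interpret Q: group QQ by (rule QQ_group)
  have zc: "z \<in> carrier QQ" using assms(1) by (simp add: kernel_def Gr_Pq_eq)
  from assms(2) obtain v where v: "v \<in> words (carrier G)" "y = wclass (carrier G) QR v"
    by (auto simp: Gr_Pq_eq pres_carrier)
  have "z \<otimes>\<^bsub>QQ\<^esub> weval QQ gQ v = weval QQ gQ v \<otimes>\<^bsub>QQ\<^esub> z"
    using v(1)
  proof (induction v)
    case Nil then show ?case using zc by simp
  next
    case (Cons x v)
    obtain a b where x: "x = (a,b)" by (cases x)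
    have a: "a \<in> carrier G" and v: "v \<in> words (carrier G)" using Cons x by auto
    have ga: "gQ a \<in> carrier QQ" by (rule gQ_carrier[OF a])
    have vc: "weval QQ gQ v \<in> carrier QQ" by (rule Q.weval_closed[OF gens_image v])
    have cm: "z \<otimes>\<^bsub>QQ\<^esub> gQ a = gQ a \<otimes>\<^bsub>QQ\<^esub> z" by (rule central_gen[OF assms(1) a])
    have cmi: "z \<otimes>\<^bsub>QQ\<^esub> inv\<^bsub>QQ\<^esub> gQ a = inv\<^bsub>QQ\<^esub> gQ a \<otimes>\<^bsub>QQ\<^esub> z"
      by (rule Q.comm_inv[OF zc ga cm])
    define c where "c = (if b then gQ a else inv\<^bsub>QQ\<^esub> gQ a)"
    have c: "c \<in> carrier QQ" "z \<otimes>\<^bsub>QQ\<^esub> c = c \<otimes>\<^bsub>QQ\<^esub> z" using ga cm cmi by (simp_all add: c_def)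
    have "weval QQ gQ ((a,b)#v) = c \<otimes>\<^bsub>QQ\<^esub> weval QQ gQ v" by (simp add: c_def)
    then have "z \<otimes>\<^bsub>QQ\<^esub> weval QQ gQ ((a,b)#v) = c \<otimes>\<^bsub>QQ\<^esub> (z \<otimes>\<^bsub>QQ\<^esub> weval QQ gQ v)"
      using c zc vc by (simp add: Q.m_assoc[symmetric])
    also have "\<dots> = c \<otimes>\<^bsub>QQ\<^esub> weval QQ gQ v \<otimes>\<^bsub>QQ\<^esub> z" using Cons.IH[OF v] c zc vc by (simp add: Q.m_assoc)
    also have "\<dots> = weval QQ gQ ((a,b)#v) \<otimes>\<^bsub>QQ\<^esub> z" by (simp add: c_def)
    finally show ?case using x by simp
  qed
  then show ?thesis using weval_gens[OF v(1)] v(2) by (simp add: Gr_Pq_eq)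
qed

end



lemma Gr_rels_cases:
  assumes "(x, y) \<in> Gr_rels P op pw e"
  obtains a b where "a \<in> P" "b \<in> P" "x = [(op a b, True)]"
      "y = [(a, True), (b, True), (a, False)]"
    | n a where "a \<in> P" "x = [(pw n a, True)]" "y = wpow [(a, True)] n"
    | "x = [(e, True)]" "y = []"
  using assms unfolding Gr_rels_def by blast

context
  fixes P :: "'a set" and op :: "'a \<Rightarrow> 'a \<Rightarrow> 'a" and pw :: "int \<Rightarrow> 'a \<Rightarrow> 'a" and e :: 'a
begin

abbreviation "GG \<equiv> Gr P op pw e"

lemma GG_eq: "GG = presentation P (Gr_rels P op pw e)" by (simp add: Gr_def)

lemma GG_group: "group GG" unfolding GG_eq by (rule presentation_group)

definition fQ :: "'a \<Rightarrow> 'a word set word set" where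
  "fQ a = group.gQ GG (gen P (Gr_rels P op pw e) a)"

lemma s_facts:
  shows "pres_hom (Gr_Pq GG) fQ \<in> hom GG (Gr_Pq GG)"
    and "\<And>U. U \<in> carrier GG \<Longrightarrow> epsilon GG (pres_hom (Gr_Pq GG) fQ U) = U"
proof -
  interpret GG: group GG by (rule GG_group)
  interpret Q: group GG.QQ by (rule GG.QQ_group)
  let ?R = "Gr_rels P op pw e"
  let ?gen = "gen P ?R"
  have genc: "\<And>a. a \<in> P \<Longrightarrow> ?gen a \<in> carrier GG" unfolding GG_eq by (rule gen_carrier)
  have fQc: "\<And>a. a \<in> P \<Longrightarrow> fQ a \<in> carrier GG.QQ"
    unfolding fQ_def by (rule GG.gQ_carrier[OF genc])
  have fim: "fQ ` P \<subseteq> carrier GG.QQ" using fQc by (rule image_subsetI)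
  have resp: "weval GG.QQ fQ x = weval GG.QQ fQ y"
    if xy: "(x, y) \<in> ?R" "x \<in> words P" "y \<in> words P" for x y
    using xy(1)
  proof (cases rule: Gr_rels_cases)
    case (1 a b)
    have o: "op a b \<in> P" using xy(2) 1 by simp
    have "fQ (op a b) = GG.gQ (?gen a \<otimes>\<^bsub>GG\<^esub> ?gen b \<otimes>\<^bsub>GG\<^esub> inv\<^bsub>GG\<^esub> ?gen a)"
      using Gr_gen_op[where op=op and pw=pw and e=e, OF 1(1,2) o] by (simp add: fQ_def GG_eq)
    also have "\<dots> = fQ a \<otimes>\<^bsub>GG.QQ\<^esub> fQ b \<otimes>\<^bsub>GG.QQ\<^esub> inv\<^bsub>GG.QQ\<^esub> fQ a"
      unfolding fQ_def by (rule GG.gQ_conj[OF genc[OF 1(1)] genc[OF 1(2)]])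
    finally show ?thesis using 1 fQc[OF 1(1)] fQc[OF 1(2)] by (simp add: Q.m_assoc)
  next
    case (2 n a)
    have o: "pw n a \<in> P" using xy(2) 2 by simp
    have aw: "[(a, True)] \<in> words P" using 2 by simp
    have "fQ (pw n a) = GG.gQ (?gen a [^]\<^bsub>GG\<^esub> n)"
      using Gr_gen_pw[where op=op and pw=pw and e=e, OF 2(1) o] by (simp add: fQ_def GG_eq)
    also have "\<dots> = fQ a [^]\<^bsub>GG.QQ\<^esub> n"
      unfolding fQ_def by (rule GG.gQ_pow[OF genc[OF 2(1)]])
    finally have x: "weval GG.QQ fQ x = fQ a [^]\<^bsub>GG.QQ\<^esub> n" using 2 fQc[OF 2(1)] o fQc[OF o] by simp
    have "weval GG.QQ fQ y = weval GG.QQ fQ [(a, True)] [^]\<^bsub>GG.QQ\<^esub> n"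
      unfolding 2 by (rule Q.weval_wpow[OF fim aw])
    then show ?thesis using x fQc[OF 2(1)] by simp
  next
    case 3
    have ep: "e \<in> P" using xy(2) 3 by simp
    have "fQ e = GG.gQ \<one>\<^bsub>GG\<^esub>"
      using Gr_gen_e[where op=op and pw=pw and e=e, OF ep] by (simp add: fQ_def GG_eq)
    also have "\<dots> = \<one>\<^bsub>GG.QQ\<^esub>" by (rule GG.gQ_one)
    finally show ?thesis using 3 by simp
  qed
  have hom0: "pres_hom GG.QQ fQ \<in> hom (presentation P ?R) GG.QQ"
    by (rule Q.pres_hom_hom[OF fim resp])
  have hom: "pres_hom GG.QQ fQ \<in> hom GG GG.QQ"
    using hom0 GG_eq by simp
  then show "pres_hom (Gr_Pq GG) fQ \<in> hom GG (Gr_Pq GG)" by (simp add: GG.Gr_Pq_eq)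
  fix U assume U: "U \<in> carrier GG"
  then obtain w where w: "w \<in> words P" "U = wclass P ?R w" by (auto simp: GG_eq pres_carrier)
  have "pres_hom (Gr_Pq GG) fQ U = weval GG.QQ fQ w"
    unfolding GG.Gr_Pq_eq w(2) by (rule Q.pres_hom_wclass[OF fim resp w(1)])
  then have "epsilon GG (pres_hom (Gr_Pq GG) fQ U) = weval GG (epsilon GG \<circ> fQ) w"
    using hom_weval[OF Q.is_group GG.is_group _ fim w(1)] GG.eps_hom by (simp add: GG.Gr_Pq_eq)
  also have "\<dots> = weval GG ?gen w"
  proof (rule weval_cong[OF w(1)])
    fix a assume a: "a \<in> P"
    have "(epsilon GG \<circ> fQ) a = weval GG id [(?gen a, True)]"
      unfolding comp_def fQ_def by (rule GG.eps_wclass) (use genc[OF a] in simp)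
    then show "(epsilon GG \<circ> fQ) a = ?gen a" using genc[OF a] by simp
  qed
  also have "\<dots> = U" using weval_gens[OF w(1)] w(2) by (simp add: GG_eq)
  finally show "epsilon GG (pres_hom (Gr_Pq GG) fQ U) = U" .
qed

end



theorem mainTheorem13:
  fixes P :: "'a set" and op :: "'a \<Rightarrow> 'a \<Rightarrow> 'a" and pw :: "int \<Rightarrow> 'a \<Rightarrow> 'a" and e :: 'a
  assumes "power_quandle P op pw e"
  shows "Gr_Pq (Gr P op pw e) \<cong> (Gr P op pw e) \<times>\<times> A_grp (Gr P op pw e)"
proof -
  let ?G = "Gr P op pw e"
  let ?Q = "Gr_Pq ?G"
  let ?E = "epsilon ?G"
  define s where "s = pres_hom ?Q (fQ P op pw e)"
  interpret G: group ?G by (rule GG_group)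
  interpret Q: group ?Q unfolding G.Gr_Pq_eq by (rule G.QQ_group)
  have shom: "s \<in> hom ?G ?Q" unfolding s_def by (rule s_facts(1))
  have Es: "\<And>U. U \<in> carrier ?G \<Longrightarrow> ?E (s U) = U" unfolding s_def by (rule s_facts(2))
  have Ehom: "?E \<in> hom ?Q ?G" by (rule G.eps_hom)
  interpret sh: group_hom ?G ?Q s by (simp add: group_hom_def group_hom_axioms_def shom G.is_group Q.is_group)
  interpret Eh: group_hom ?Q ?G ?E by (simp add: group_hom_def group_hom_axioms_def Ehom G.is_group Q.is_group)
  let ?K = "kernel ?Q ?G ?E"
  have cA: "carrier (A_grp ?G) = ?K" by (simp add: A_grp_def)
  have mA: "\<And>x y. x \<otimes>\<^bsub>A_grp ?G\<^esub> y = x \<otimes>\<^bsub>?Q\<^esub> y" by (simp add: A_grp_def)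
  define phi where "phi x = (?E x, x \<otimes>\<^bsub>?Q\<^esub> inv\<^bsub>?Q\<^esub> s (?E x))" for x
  define psi where "psi p = snd p \<otimes>\<^bsub>?Q\<^esub> s (fst p)" for p
  have Ec: "\<And>x. x \<in> carrier ?Q \<Longrightarrow> ?E x \<in> carrier ?G" by simp
  have sc: "\<And>g. g \<in> carrier ?G \<Longrightarrow> s g \<in> carrier ?Q" by simp
  have kin: "x \<otimes>\<^bsub>?Q\<^esub> inv\<^bsub>?Q\<^esub> s (?E x) \<in> ?K" if x: "x \<in> carrier ?Q" for x
  proof -
    have "?E (x \<otimes>\<^bsub>?Q\<^esub> inv\<^bsub>?Q\<^esub> s (?E x)) = ?E x \<otimes>\<^bsub>?G\<^esub> inv\<^bsub>?G\<^esub> ?E (s (?E x))"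
      using x by simp
    also have "\<dots> = \<one>\<^bsub>?G\<^esub>" using x Es[OF Ec[OF x]] by simp
    finally show ?thesis using x by (simp add: kernel_def)
  qed
  have Kc: "\<And>k. k \<in> ?K \<Longrightarrow> k \<in> carrier ?Q \<and> ?E k = \<one>\<^bsub>?G\<^esub>" by (simp add: kernel_def)
  have phi_c: "phi x \<in> carrier (?G \<times>\<times> A_grp ?G)" if "x \<in> carrier ?Q" for x
    using that kin by (simp add: phi_def cA)
  have hom: "phi \<in> hom ?Q (?G \<times>\<times> A_grp ?G)"
  proof (rule homI)
    fix x assume "x \<in> carrier ?Q" then show "phi x \<in> carrier (?G \<times>\<times> A_grp ?G)" by (rule phi_c)
  next
    fix x y assume x: "x \<in> carrier ?Q" and y: "y \<in> carrier ?Q"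
    let ?sx = "s (?E x)" and ?sy = "s (?E y)"
    have sx: "?sx \<in> carrier ?Q" and sy: "?sy \<in> carrier ?Q" using x y by simp_all
    have k2: "y \<otimes>\<^bsub>?Q\<^esub> inv\<^bsub>?Q\<^esub> ?sy \<in> ?K" by (rule kin[OF y])
    have k2c: "y \<otimes>\<^bsub>?Q\<^esub> inv\<^bsub>?Q\<^esub> ?sy \<in> carrier ?Q" using x y by simp
    have comm: "inv\<^bsub>?Q\<^esub> ?sx \<otimes>\<^bsub>?Q\<^esub> (y \<otimes>\<^bsub>?Q\<^esub> inv\<^bsub>?Q\<^esub> ?sy)
        = (y \<otimes>\<^bsub>?Q\<^esub> inv\<^bsub>?Q\<^esub> ?sy) \<otimes>\<^bsub>?Q\<^esub> inv\<^bsub>?Q\<^esub> ?sx"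
      using G.central[OF k2, of "inv\<^bsub>?Q\<^esub> ?sx"] sx by simp
    have "(x \<otimes>\<^bsub>?Q\<^esub> inv\<^bsub>?Q\<^esub> ?sx) \<otimes>\<^bsub>?Q\<^esub> (y \<otimes>\<^bsub>?Q\<^esub> inv\<^bsub>?Q\<^esub> ?sy)
        = x \<otimes>\<^bsub>?Q\<^esub> (inv\<^bsub>?Q\<^esub> ?sx \<otimes>\<^bsub>?Q\<^esub> (y \<otimes>\<^bsub>?Q\<^esub> inv\<^bsub>?Q\<^esub> ?sy))"
      using x sx k2c by (simp add: Q.m_assoc)
    also have "\<dots> = x \<otimes>\<^bsub>?Q\<^esub> ((y \<otimes>\<^bsub>?Q\<^esub> inv\<^bsub>?Q\<^esub> ?sy) \<otimes>\<^bsub>?Q\<^esub> inv\<^bsub>?Q\<^esub> ?sx)"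
      by (simp only: comm)
    also have "\<dots> = (x \<otimes>\<^bsub>?Q\<^esub> y) \<otimes>\<^bsub>?Q\<^esub> inv\<^bsub>?Q\<^esub> (?sx \<otimes>\<^bsub>?Q\<^esub> ?sy)"
      using x y sx sy by (simp add: Q.m_assoc Q.inv_mult_group)
    also have "?sx \<otimes>\<^bsub>?Q\<^esub> ?sy = s (?E (x \<otimes>\<^bsub>?Q\<^esub> y))" using x y by simp
    finally have second: "(x \<otimes>\<^bsub>?Q\<^esub> inv\<^bsub>?Q\<^esub> ?sx) \<otimes>\<^bsub>?Q\<^esub> (y \<otimes>\<^bsub>?Q\<^esub> inv\<^bsub>?Q\<^esub> ?sy)
        = (x \<otimes>\<^bsub>?Q\<^esub> y) \<otimes>\<^bsub>?Q\<^esub> inv\<^bsub>?Q\<^esub> s (?E (x \<otimes>\<^bsub>?Q\<^esub> y))" .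
    show "phi (x \<otimes>\<^bsub>?Q\<^esub> y) = phi x \<otimes>\<^bsub>?G \<times>\<times> A_grp ?G\<^esub> phi y"
      unfolding phi_def mult_DirProd mA using second x y by simp
  qed
  have bij: "bij_betw phi (carrier ?Q) (carrier (?G \<times>\<times> A_grp ?G))"
  proof (rule bij_betw_byWitness[where f'=psi])
    show "\<forall>x\<in>carrier ?Q. psi (phi x) = x"
    proof
      fix x assume x: "x \<in> carrier ?Q"
      then show "psi (phi x) = x" by (simp add: psi_def phi_def Q.m_assoc)
    qed
    show "\<forall>p\<in>carrier (?G \<times>\<times> A_grp ?G). phi (psi p) = p"
    proof
      fix p assume "p \<in> carrier (?G \<times>\<times> A_grp ?G)"
      then obtain g k where p: "p = (g, k)" "g \<in> carrier ?G" "k \<in> ?K" by (auto simp: cA)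
      have k: "k \<in> carrier ?Q" "?E k = \<one>\<^bsub>?G\<^esub>" using Kc[OF p(3)] by auto
      have E: "?E (k \<otimes>\<^bsub>?Q\<^esub> s g) = g" using k p(2) Es[OF p(2)] by simp
      show "phi (psi p) = p" unfolding phi_def psi_def p using E k p(2)
        by (simp add: Q.m_assoc)
    qed
    show "phi ` carrier ?Q \<subseteq> carrier (?G \<times>\<times> A_grp ?G)" using phi_c by blast
    show "psi ` carrier (?G \<times>\<times> A_grp ?G) \<subseteq> carrier ?Q"
    proof
      fix q assume "q \<in> psi ` carrier (?G \<times>\<times> A_grp ?G)"
      then obtain g k where "q = psi (g, k)" "g \<in> carrier ?G" "k \<in> ?K" by (auto simp: cA)
      then show "q \<in> carrier ?Q" using Kc by (simp add: psi_def)
    qed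
  qed
  have "phi \<in> iso ?Q (?G \<times>\<times> A_grp ?G)" using hom bij by (simp add: iso_def)
  then show ?thesis unfolding is_iso_def by blast
qed


end
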